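(* Let $q$ be a power of the prime $p$ and let $n$ be a positive integer not divisible by $p$. Let $h\in\mathbb{F}_q[x]$ with $\gcd\left(h(x),\frac{x^n-1}{x-1}\right)=1$, and let $b(x)=\sum_{i=0}^m b_i x^i\in\mathbb{F}_q[x]$ be a permutation polynomial of $\mathbb{F}_q$. Then for every $\theta_0,\ldots,\theta_{q-1}\in\mathbb{F}_{q^n}$, the polynomial $$P(x)=L_h(x)-\frac{h(1)}{n}\cdot\mathrm{Tr}_{q^n/q}(x)+\sum_{i=0}^m\frac{b_i}{n}\cdot\mathrm{Tr}_{q^n/q}(x)^i+\sum_{i=0}^{q-1}(\theta_i^q-\theta_i)\cdot\mathrm{Tr}_{q^n/q}(x)^i$$ is a permutation polynomial of $\mathbb{F}_{q^n}$. In addition, if $\gcd\left(h(x)+1,\frac{x^n-1}{x-1}\right)=1$ and $b$ is a complete permutation polynomial of $\mathbb{F}_q$, then $P$ is a complete permutation polynomial of $\mathbb{F}_{q^n}$.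
   Context: For $u(x)=\sum_{i=0}^m a_i x^i\in\mathbb{F}_q[x]$, its linearized $q$-associate is $L_u(x)=\sum_{i=0}^m a_i x^{q^i}$. $\mathrm{Tr}_{q^n/q}(x)=x+x^q+\cdots+x^{q^{n-1}}$. A permutation polynomial of a finite field $K$ is a polynomial inducing a bijection of $K$; it is a complete permutation polynomial if moreover $b(x)+x$ induces a bijection of $K$. *)

theory Defs
  imports "HOL-Computational_Algebra.Polynomial_Factorial"
begin

text \<open>The finite field F_q viewed inside F_{q^n} (the type 'a): the fixed points of x \<mapsto> x^q.\<close>
definition subfield_q :: "nat \<Rightarrow> 'a::field set" where
  "subfield_q q = {x. x ^ q = x}"

definition poly_over :: "nat \<Rightarrow> 'a::field poly \<Rightarrow> bool" where
  "poly_over q u \<longleftrightarrow> (\<forall>i. coeff u i \<in> subfield_q q)"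

definition lin_assoc :: "nat \<Rightarrow> 'a::field poly \<Rightarrow> 'a \<Rightarrow> 'a" where
  "lin_assoc q u x = (\<Sum>i\<le>degree u. coeff u i * x ^ (q ^ i))"

definition trace_qn :: "nat \<Rightarrow> nat \<Rightarrow> 'a::field \<Rightarrow> 'a" where
  "trace_qn q n x = (\<Sum>j<n. x ^ (q ^ j))"

end

theory Submission imports Defs "HOL-Computational_Algebra.Primes" begin


lemma lin_assoc_sum:
  assumes "degree u < N"
  shows "lin_assoc q u x = (\<Sum>i<N. coeff u i * x ^ (q ^ i))"
proof -
  have "lin_assoc q u x = (\<Sum>i<Suc (degree u). coeff u i * x ^ (q ^ i))"
    unfolding lin_assoc_def using lessThan_Suc_atMost by simp
  also have "\<dots> = (\<Sum>i<N. coeff u i * x ^ (q ^ i))"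
    by (rule sum.mono_neutral_left) (use assms in \<open>auto simp: coeff_eq_0\<close>)
  finally show ?thesis .
qed

lemma lin_assoc_pCons: "lin_assoc q (pCons c w) x = c * x + lin_assoc q w (x ^ q)"
proof -
  have d: "degree (pCons c w) < Suc (Suc (degree w))"
    by (metis degree_pCons_le le_imp_less_Suc)
  have "lin_assoc q (pCons c w) x = (\<Sum>i<Suc (Suc (degree w)). coeff (pCons c w) i * x ^ (q ^ i))"
    by (rule lin_assoc_sum[OF d])
  also have "\<dots> = c * x + (\<Sum>i<Suc (degree w). coeff w i * (x ^ q) ^ (q ^ i))"
    by (subst sum.lessThan_Suc_shift) (simp add: power_mult)
  also have "(\<Sum>i<Suc (degree w). coeff w i * (x ^ q) ^ (q ^ i)) = lin_assoc q w (x ^ q)"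
    by (rule lin_assoc_sum[symmetric]) simp
  finally show ?thesis .
qed

lemma lin_assoc_add: "lin_assoc q (u + v) x = lin_assoc q u x + lin_assoc q v x"
proof -
  define N where "N = Suc (max (degree u) (degree v))"
  have "degree (u + v) < N" "degree u < N" "degree v < N"
    using degree_add_le_max[of u v] by (auto simp: N_def)
  then show ?thesis
    by (simp add: lin_assoc_sum[where N = N] distrib_right sum.distrib)
qed

lemma lin_assoc_smult: "lin_assoc q (smult c u) x = c * lin_assoc q u x"
proof -
  have "degree (smult c u) < Suc (degree u)" "degree u < Suc (degree u)"
    using degree_smult_le[of c u] by auto
  then show ?thesis
    by (simp only: lin_assoc_sum[where N = "Suc (degree u)"] sum_distrib_left coeff_smult mult.assoc)
qed

lemma lin_assoc_0 [simp]: "lin_assoc q 0 x = 0"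
  by (simp add: lin_assoc_def)

lemma lin_assoc_1 [simp]: "lin_assoc q 1 x = x"
  by (simp add: lin_assoc_def)

lemma lin_assoc_pCons0: "lin_assoc q (pCons 0 w) x = lin_assoc q w (x ^ q)"
  by (simp add: lin_assoc_pCons)

lemma ideal_mult:
  fixes z :: "'a::field"
  assumes "\<forall>j. lin_assoc q v (z ^ (q ^ j)) = 0"
  shows "\<forall>j. lin_assoc q (u * v) (z ^ (q ^ j)) = 0"
proof (induction u rule: pCons_induct)
  case 0
  then show ?case by simp
next
  case (pCons a p)
  show ?case
  proof
    fix j
    have "lin_assoc q (pCons a p * v) (z ^ (q ^ j)) =
          a * lin_assoc q v (z ^ (q ^ j)) + lin_assoc q (p * v) ((z ^ (q ^ j)) ^ q)"
      by (simp add: mult_pCons_left lin_assoc_add lin_assoc_smult lin_assoc_pCons0)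
    also have "(z ^ (q ^ j)) ^ q = z ^ (q ^ Suc j)"
      by (simp add: power_mult[symmetric] mult.commute)
    finally show "lin_assoc q (pCons a p * v) (z ^ (q ^ j)) = 0"
      using assms pCons.IH[rule_format, of "Suc j"] by simp
  qed
qed



lemma char_dvd_card:
  "CHAR('a::{field,finite}) dvd card (UNIV :: 'a set)"
proof -
  define c where "c = CHAR('a)"
  have cpos: "c > 0" unfolding c_def by (simp add: finite_imp_CHAR_pos)
  define H where "H = range (of_nat :: nat \<Rightarrow> 'a)"
  have Hadd: "a + b \<in> H" if ab: "a \<in> H" "b \<in> H" for a b
  proof -
    obtain m1 m2 where "a = of_nat m1" "b = of_nat m2" using ab unfolding H_def by auto
    then have "a + b = of_nat (m1 + m2)" by simp
    then show ?thesis unfolding H_def by blast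
  qed
  have Hneg: "- a \<in> H" if aH: "a \<in> H" for a
  proof -
    obtain m where m: "a = of_nat m" using aH unfolding H_def by auto
    have "of_nat (c * m - m) = (of_nat (c * m) :: 'a) - of_nat m"
      using cpos by (intro of_nat_diff) simp
    also have "of_nat (c * m) = (0::'a)" by (simp add: c_def)
    finally show ?thesis unfolding H_def m by (metis rangeI diff_0)
  qed
  have Hdiff: "a - b \<in> H" if "a \<in> H" "b \<in> H" for a b
    using Hadd[OF that(1) Hneg[OF that(2)]] by simp
  have H_eq: "H = of_nat ` {..<c}"
  proof
    show "H \<subseteq> of_nat ` {..<c}"
    proof
      fix a assume "a \<in> H"
      then obtain m where m: "a = of_nat m" unfolding H_def by auto
      have "of_nat m = (of_nat (m mod c) :: 'a) + of_nat (c * (m div c))"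
        by (metis of_nat_add mod_mult_div_eq mult.commute)
      also have "of_nat (c * (m div c)) = (0::'a)" by (simp add: c_def)
      finally show "a \<in> of_nat ` {..<c}" using m cpos by auto
    qed
  qed (auto simp: H_def)
  have inj: "inj_on (of_nat :: nat \<Rightarrow> 'a) {..<c}"
  proof (rule inj_onI)
    fix a b assume ab: "a \<in> {..<c}" "b \<in> {..<c}" "(of_nat a :: 'a) = of_nat b"
    show "a = b"
    proof (rule ccontr)
      assume "a \<noteq> b"
      then consider "a < b" | "b < a" by linarith
      then show False
      proof cases
        case 1
        have "(of_nat (b - a) :: 'a) = of_nat b - of_nat a" using 1 by (simp add: of_nat_diff)
        then have "(of_nat (b - a) :: 'a) = 0" using ab by simp
        then have "c dvd b - a" by (simp add: c_def of_nat_eq_0_iff_char_dvd)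
        then show False using 1 ab by (auto dest: dvd_imp_le)
      next
        case 2
        have "(of_nat (a - b) :: 'a) = of_nat a - of_nat b" using 2 by (simp add: of_nat_diff)
        then have "(of_nat (a - b) :: 'a) = 0" using ab by simp
        then have "c dvd a - b" by (simp add: c_def of_nat_eq_0_iff_char_dvd)
        then show False using 2 ab by (auto dest: dvd_imp_le)
      qed
    qed
  qed
  have cardH: "card H = c" unfolding H_eq using card_image[OF inj] by simp
  define C where "C = (\<lambda>x. (\<lambda>h. x + h) ` H) ` (UNIV :: 'a set)"
  have UC: "\<Union>C = UNIV"
  proof -
    have "x \<in> (\<lambda>h. x + h) ` H" for x :: 'a
      using Hdiff[of 0 0] by (metis add_0_right diff_self image_eqI H_def rangeI of_nat_0)
    then show ?thesis unfolding C_def by blast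
  qed
  have cardC: "\<forall>X\<in>C. card X = c"
    unfolding C_def using cardH by (auto simp: card_image inj_on_def)
  have disj: "\<forall>X1\<in>C. \<forall>X2\<in>C. X1 \<noteq> X2 \<longrightarrow> X1 \<inter> X2 = {}"
  proof (intro ballI impI)
    fix X1 X2 assume X: "X1 \<in> C" "X2 \<in> C" "X1 \<noteq> X2"
    obtain x1 where x1: "X1 = (\<lambda>h. x1 + h) ` H" using X unfolding C_def by auto
    obtain x2 where x2: "X2 = (\<lambda>h. x2 + h) ` H" using X unfolding C_def by auto
    show "X1 \<inter> X2 = {}"
    proof (rule ccontr)
      assume "X1 \<inter> X2 \<noteq> {}"
      then obtain h1 h2 where h: "h1 \<in> H" "h2 \<in> H" "x1 + h1 = x2 + h2"
        unfolding x1 x2 by auto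
      have sub: "(\<lambda>h. x1 + h) ` H \<subseteq> (\<lambda>h. x2 + h) ` H"
        if "x1 + h1 = x2 + h2" "h1 \<in> H" "h2 \<in> H" for x1 x2 h1 h2
      proof
        fix y assume "y \<in> (\<lambda>h. x1 + h) ` H"
        then obtain h where hh: "h \<in> H" "y = x1 + h" by auto
        have "y = x2 + ((h2 - h1) + h)" using hh that by (simp add: algebra_simps)
        moreover have "(h2 - h1) + h \<in> H" using Hadd Hdiff hh that by blast
        ultimately show "y \<in> (\<lambda>h. x2 + h) ` H" by blast
      qed
      have "X1 = X2" unfolding x1 x2
        using sub[of x1 h1 x2 h2] sub[of x2 h2 x1 h1] h by (metis subset_antisym)
      then show False using X by simp
    qed
  qed
  have "c * card C = card (\<Union>C)"
    by (rule card_partition) (use cardC disj in auto)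
  then show ?thesis unfolding UC c_def by (metis dvd_triv_left)
qed

lemma power_card_eq_same:
  fixes x :: "'a :: {field,finite}"
  shows   "x ^ card (UNIV :: 'a set) = x"
proof (cases "x = 0")
  case False
  have "x * (\<Prod>y\<in>UNIV-{0}. x * y) = x * x ^ (card (UNIV :: 'a set) - 1) * \<Prod>(UNIV-{0})"
    by (simp add: prod.distrib mult_ac)
  also have "x * x ^ (card (UNIV :: 'a set) - 1) = x ^ Suc (card (UNIV :: 'a set) - 1)"
    by (subst power_Suc) auto
  also have "Suc (card (UNIV :: 'a set) - 1) = card (UNIV :: 'a set)"
    using finite_UNIV_card_ge_0[where ?'a = 'a] by simp
  also have "(\<Prod>y\<in>UNIV-{0}. x * y) = (\<Prod>y\<in>UNIV-{0}. y)"
    by (rule prod.reindex_bij_witness[of _ "\<lambda>y. y / x" "\<lambda>y. x * y"]) (use False in auto)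
  finally show ?thesis
    by simp
qed (use finite_UNIV_card_ge_0[where ?'a = 'a] in auto)



definition phi :: "nat \<Rightarrow> 'a::field poly" where
  "phi n = (\<Sum>j<n. monom 1 j)"

lemma coeff_phi: "coeff (phi n) i = (if i < n then 1 else 0)"
  by (simp add: phi_def coeff_sum coeff_monom)

lemma phi_div: "(monom 1 n - 1) div [:-1, 1:] = (phi n :: 'a::field poly)"
proof -
  have "monom 1 n - 1 = (phi n :: 'a poly) * [:-1, 1:]"
  proof (induction n)
    case 0 then show ?case by (simp add: phi_def)
  next
    case (Suc n)
    have "phi (Suc n) * [:-1, 1:] = phi n * [:-1, 1:] + monom (1::'a) n * [:-1, 1:]"
      by (simp add: phi_def distrib_right)
    also have "monom (1::'a) n * [:-1, 1:] = monom 1 (Suc n) - monom 1 n"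
      by (simp add: monom_altdef algebra_simps)
    also have "(phi n :: 'a poly) * [:-1, 1:] = monom 1 n - 1" by (fact Suc.IH[symmetric])
    also have "(monom 1 n - 1) + (monom 1 (Suc n) - monom 1 n) = monom 1 (Suc n) - (1::'a poly)"
      by simp
    finally show ?case by (rule sym)
  qed
  then have "(monom 1 n - 1) div [:-1, 1:] = ((phi n :: 'a poly) * [:-1, 1:]) div [:-1, 1:]"
    by (simp only:)
  also have "\<dots> = phi n" by (rule nonzero_mult_div_cancel_right) simp
  finally show ?thesis .
qed

lemma lin_assoc_phi: "lin_assoc q (phi n) x = trace_qn q n x"
proof -
  have "degree (phi n :: 'a poly) \<le> n"
    by (rule degree_le) (simp add: coeff_phi)
  then have "degree (phi n :: 'a poly) < Suc n" by simp
  then have "lin_assoc q (phi n) x = (\<Sum>i<Suc n. coeff (phi n) i * x ^ (q ^ i))"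
    by (rule lin_assoc_sum)
  also have "\<dots> = (\<Sum>i<n. x ^ (q ^ i))"
    by (simp add: coeff_phi)
  finally show ?thesis by (simp add: trace_qn_def)
qed

context
  fixes q n :: nat
  assumes frob: "\<And>x y::'a::field_gcd. (x + y) ^ q = x ^ q + y ^ q"
    and qpos: "q > 0"
    and npos: "n > 0"
    and fixq: "\<And>x::'a. x ^ (q ^ n) = x"
    and nz: "(of_nat n :: 'a) \<noteq> 0"
begin

lemma frob_0: "(0::'a) ^ q = 0" using qpos by simp

lemma frob_diff: "((x::'a) - y) ^ q = x ^ q - y ^ q"
  using frob[of "x - y" y] by (simp add: algebra_simps)

lemma frob_sum: "(\<Sum>i\<in>A. f i :: 'a) ^ q = (\<Sum>i\<in>A. f i ^ q)"
  by (induction A rule: infinite_finite_induct) (simp_all add: frob_0 frob)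

lemma frobj_add: "((x::'a) + y) ^ (q ^ j) = x ^ (q ^ j) + y ^ (q ^ j)"
proof (induction j arbitrary: x y)
  case 0 then show ?case by simp
next
  case (Suc j)
  have "(x + y) ^ (q ^ Suc j) = ((x + y) ^ q) ^ (q ^ j)"
    by (simp add: power_mult)
  also have "\<dots> = (x ^ q) ^ (q ^ j) + (y ^ q) ^ (q ^ j)" by (simp add: frob Suc)
  finally show ?case by (simp add: power_mult)
qed

lemma frobj_diff: "((x::'a) - y) ^ (q ^ j) = x ^ (q ^ j) - y ^ (q ^ j)"
  using frobj_add[of "x - y" y j] by (simp add: algebra_simps)

lemma frobj_0: "(0::'a) ^ (q ^ j) = 0" using qpos by simp

lemma frobj_sum: "(\<Sum>i\<in>A. f i :: 'a) ^ (q ^ j) = (\<Sum>i\<in>A. f i ^ (q ^ j))"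
  by (induction A rule: infinite_finite_induct) (simp_all add: frobj_0 frobj_add)

lemma sub_powj: "(c::'a) \<in> subfield_q q \<Longrightarrow> c ^ (q ^ j) = c"
proof (induction j)
  case 0 then show ?case by simp
next
  case (Suc j)
  have "c ^ (q ^ Suc j) = (c ^ q) ^ (q ^ j)" by (simp add: power_mult)
  then show ?case using Suc by (simp add: subfield_q_def)
qed

lemma lin_frob:
  assumes "poly_over q u"
  shows "(lin_assoc q u (x::'a)) ^ q = lin_assoc q u (x ^ q)"
proof -
  have "(lin_assoc q u x) ^ q = (\<Sum>i\<le>degree u. (coeff u i) ^ q * (x ^ (q ^ i)) ^ q)"
    unfolding lin_assoc_def frob_sum by (simp add: power_mult_distrib)
  also have "\<dots> = (\<Sum>i\<le>degree u. coeff u i * (x ^ q) ^ (q ^ i))"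
    using assms unfolding poly_over_def subfield_q_def
    by (intro sum.cong refl) (simp add: power_mult[symmetric] mult.commute)
  finally show ?thesis by (simp add: lin_assoc_def)
qed

lemma lin_frobj:
  assumes "poly_over q u"
  shows "(lin_assoc q u (x::'a)) ^ (q ^ j) = lin_assoc q u (x ^ (q ^ j))"
proof (induction j arbitrary: x)
  case 0 then show ?case by simp
next
  case (Suc j)
  have "(lin_assoc q u x) ^ (q ^ Suc j) = ((lin_assoc q u x) ^ q) ^ (q ^ j)"
    by (simp add: power_mult)
  also have "\<dots> = lin_assoc q u ((x ^ q) ^ (q ^ j))" by (simp add: lin_frob[OF assms] Suc)
  finally show ?case by (simp add: power_mult)
qed

lemma poly_over_phi: "poly_over q (phi n :: 'a poly)"
  unfolding poly_over_def subfield_q_def coeff_phi using qpos by simp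


lemma lin_add_arg: "lin_assoc q u ((x::'a) + y) = lin_assoc q u x + lin_assoc q u y"
  unfolding lin_assoc_def sum.distrib[symmetric]
  by (intro sum.cong refl) (simp only: frobj_add distrib_left)

lemma lin_diff_arg: "lin_assoc q u ((x::'a) - y) = lin_assoc q u x - lin_assoc q u y"
  unfolding lin_assoc_def sum_subtractf[symmetric]
  by (intro sum.cong refl) (simp only: frobj_diff right_diff_distrib)

lemma lin_zero_arg: "lin_assoc q u (0::'a) = 0"
  unfolding lin_assoc_def by (simp add: frobj_0)

lemma lin_sum_arg: "lin_assoc q u (\<Sum>i\<in>A. f i :: 'a) = (\<Sum>i\<in>A. lin_assoc q u (f i))"
  by (induction A rule: infinite_finite_induct) (simp_all add: lin_add_arg lin_zero_arg)


lemma kernel: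
  fixes h :: "'a poly"
  assumes "poly_over q h" "gcd h (phi n) = 1"
    and "lin_assoc q h z = 0" "trace_qn q n z = 0"
  shows "z = 0"
proof -
  have Ih: "\<forall>j. lin_assoc q h (z ^ (q ^ j)) = 0"
    using lin_frobj[OF assms(1), of z] assms(3) frobj_0 by metis
  have Ip: "\<forall>j. lin_assoc q (phi n) (z ^ (q ^ j)) = 0"
    using lin_frobj[OF poly_over_phi, of z] assms(4) frobj_0 lin_assoc_phi by metis
  obtain a c where ac: "a * h + c * phi n = gcd h (phi n)"
    by (metis bezout_coefficients_fst_snd)
  have f1: "lin_assoc q (a * h) (z ^ (q ^ 0)) = 0"
    using ideal_mult[OF Ih, of a] by blast
  have f2: "lin_assoc q (c * phi n) (z ^ (q ^ 0)) = 0"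
    using ideal_mult[OF Ip, of c] by blast
  have f3: "lin_assoc q (a * h + c * phi n) (z ^ (q ^ 0)) = 0"
    unfolding lin_assoc_add f1 f2 by simp
  have f4: "a * h + c * phi n = 1" using ac assms(2) by simp
  have "lin_assoc q 1 (z ^ (q ^ 0)) = 0" using f3 unfolding f4 .
  then show ?thesis by simp
qed


lemma F_iff: "(c::'a) \<in> subfield_q q \<longleftrightarrow> c ^ q = c"
  by (simp add: subfield_q_def)

lemma F_0: "(0::'a) \<in> subfield_q q" using frob_0 by (simp add: F_iff)
lemma F_1: "(1::'a) \<in> subfield_q q" by (simp add: F_iff)
lemma F_add: "a \<in> subfield_q q \<Longrightarrow> b \<in> subfield_q q \<Longrightarrow> (a::'a) + b \<in> subfield_q q"
  by (simp add: F_iff frob)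
lemma F_diff: "a \<in> subfield_q q \<Longrightarrow> b \<in> subfield_q q \<Longrightarrow> (a::'a) - b \<in> subfield_q q"
  by (simp add: F_iff frob_diff)
lemma F_mult: "a \<in> subfield_q q \<Longrightarrow> b \<in> subfield_q q \<Longrightarrow> (a::'a) * b \<in> subfield_q q"
  by (simp add: F_iff power_mult_distrib)
lemma F_divide: "a \<in> subfield_q q \<Longrightarrow> b \<in> subfield_q q \<Longrightarrow> (a::'a) / b \<in> subfield_q q"
  by (simp add: F_iff power_divide)
lemma F_pow: "a \<in> subfield_q q \<Longrightarrow> (a::'a) ^ i \<in> subfield_q q"
proof -
  assume "a \<in> subfield_q q"
  then have "a ^ q = a" by (simp add: F_iff)
  then have "(a ^ i) ^ q = a ^ i" by (metis power_mult mult.commute)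
  then show ?thesis by (simp add: F_iff)
qed
lemma F_of_nat: "(of_nat m :: 'a) \<in> subfield_q q"
  by (induction m) (simp_all add: F_0 F_add F_1)
lemma F_sum: "(\<And>i. i \<in> A \<Longrightarrow> f i \<in> subfield_q q) \<Longrightarrow> (\<Sum>i\<in>A. f i :: 'a) \<in> subfield_q q"
  by (induction A rule: infinite_finite_induct) (simp_all add: F_0 F_add)
lemma F_poly: "poly_over q h \<Longrightarrow> t \<in> subfield_q q \<Longrightarrow> poly h (t::'a) \<in> subfield_q q"
  unfolding poly_altdef poly_over_def by (intro F_sum F_mult F_pow) auto

lemma shift_sum: "(f::nat \<Rightarrow> 'a) n = f 0 \<Longrightarrow> (\<Sum>i<n. f (Suc i)) = (\<Sum>i<n. f i)"
  using sum.lessThan_Suc_shift[of f n] sum.lessThan_Suc[of f n] by simp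

lemma trace_frob: "trace_qn q n ((y::'a) ^ q) = trace_qn q n y"
proof -
  have "trace_qn q n (y ^ q) = (\<Sum>j<n. y ^ (q ^ Suc j))"
    unfolding trace_qn_def by (intro sum.cong refl) (simp add: power_mult[symmetric] mult.commute)
  also have "\<dots> = (\<Sum>j<n. y ^ (q ^ j))"
    by (rule shift_sum[where f = "\<lambda>j. y ^ (q ^ j)"]) (simp add: fixq)
  finally show ?thesis by (simp add: trace_qn_def)
qed

lemma trace_in: "trace_qn q n (x::'a) \<in> subfield_q q"
proof -
  have "(trace_qn q n x) ^ q = trace_qn q n (x ^ q)"
    unfolding trace_qn_def frob_sum
    by (intro sum.cong refl) (simp add: power_mult[symmetric] mult.commute)
  then show ?thesis by (simp add: F_iff trace_frob)
qed

lemma trace_add: "trace_qn q n ((x::'a) + y) = trace_qn q n x + trace_qn q n y"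
  unfolding trace_qn_def by (simp only: frobj_add sum.distrib)

lemma trace_diff: "trace_qn q n ((x::'a) - y) = trace_qn q n x - trace_qn q n y"
  unfolding trace_qn_def by (simp only: frobj_diff sum_subtractf)

lemma trace_scale: "t \<in> subfield_q q \<Longrightarrow> trace_qn q n ((s::'a) * t) = trace_qn q n s * t"
  unfolding trace_qn_def sum_distrib_right
  by (intro sum.cong refl) (simp add: power_mult_distrib sub_powj)

lemma trace_const: "c \<in> subfield_q q \<Longrightarrow> trace_qn q n (c::'a) = of_nat n * c"
  unfolding trace_qn_def by (simp add: sub_powj)

lemma trace_lin:
  assumes "poly_over q h"
  shows "trace_qn q n (lin_assoc q h (x::'a)) = poly h 1 * trace_qn q n x"
proof -
  define t where "t = trace_qn q n x"
  have tF: "t \<in> subfield_q q" unfolding t_def by (rule trace_in)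
  have "trace_qn q n (lin_assoc q h x) = (\<Sum>j<n. lin_assoc q h (x ^ (q ^ j)))"
    unfolding trace_qn_def by (simp only: lin_frobj[OF assms])
  also have "\<dots> = lin_assoc q h t"
    unfolding t_def trace_qn_def by (rule lin_sum_arg[symmetric])
  also have "\<dots> = (\<Sum>i\<le>degree h. coeff h i * t)"
    unfolding lin_assoc_def using tF by (simp add: sub_powj)
  also have "\<dots> = poly h 1 * t"
    by (simp add: poly_altdef sum_distrib_right)
  finally show ?thesis by (simp add: t_def)
qed

lemma main_inj:
  fixes h :: "'a poly" and B :: "'a \<Rightarrow> 'a" and \<theta> :: "nat \<Rightarrow> 'a"
  assumes hF: "poly_over q h" and hg: "gcd h (phi n) = 1"
    and Binj: "inj_on B (subfield_q q)" and BF: "\<And>t. t \<in> subfield_q q \<Longrightarrow> B t \<in> subfield_q q"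
  shows "inj (\<lambda>x. lin_assoc q h x - poly h 1 / of_nat n * trace_qn q n x
        + B (trace_qn q n x) / of_nat n
        + (\<Sum>i<q. (\<theta> i ^ q - \<theta> i) * trace_qn q n x ^ i))"
proof -
  define T where "T = (trace_qn q n :: 'a \<Rightarrow> 'a)"
  define G where "G = (\<lambda>x. - poly h 1 / of_nat n * T x
        + B (T x) / of_nat n
        + (\<Sum>i<q. (\<theta> i ^ q - \<theta> i) * T x ^ i))"
  define P where "P = (\<lambda>x. lin_assoc q h x + G x)"
  have P_eq: "(\<lambda>x. lin_assoc q h x - poly h 1 / of_nat n * trace_qn q n x
        + B (trace_qn q n x) / of_nat n
        + (\<Sum>i<q. (\<theta> i ^ q - \<theta> i) * trace_qn q n x ^ i)) = P"
    unfolding P_def G_def T_def by (simp add: fun_eq_iff algebra_simps)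
  have h1F: "poly h 1 \<in> subfield_q q" by (rule F_poly[OF hF F_1])
  have cF: "- poly h 1 / of_nat n \<in> subfield_q q"
    by (intro F_divide F_of_nat) (metis F_0 F_diff h1F diff_0)
  have trG: "T (G x) = - poly h 1 * T x + B (T x)" for x
  proof -
    define t where "t = T x"
    have tF: "t \<in> subfield_q q" unfolding t_def T_def by (rule trace_in)
    define g where "g = (\<Sum>i<q. \<theta> i * t ^ i)"
    have gq: "g ^ q = (\<Sum>i<q. \<theta> i ^ q * t ^ i)"
      unfolding g_def frob_sum
      by (intro sum.cong refl) (metis F_iff F_pow power_mult_distrib tF)
    have psi: "(\<Sum>i<q. (\<theta> i ^ q - \<theta> i) * t ^ i) = g ^ q - g"
    proof -
      have "(\<Sum>i<q. (\<theta> i ^ q - \<theta> i) * t ^ i) = (\<Sum>i<q. \<theta> i ^ q * t ^ i) - (\<Sum>i<q. \<theta> i * t ^ i)"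
        by (simp add: left_diff_distrib sum_subtractf)
      then show ?thesis by (simp only: gq[symmetric] g_def[symmetric])
    qed
    have BF': "B t / of_nat n \<in> subfield_q q" by (intro F_divide F_of_nat BF tF)
    have "T (G x) = T (- poly h 1 / of_nat n * t) + T (B t / of_nat n) + (T (g ^ q) - T g)"
      unfolding G_def t_def[symmetric] psi unfolding T_def by (simp only: trace_add trace_diff)
    also have "T (g ^ q) = T g" unfolding T_def by (rule trace_frob)
    also have "T (- poly h 1 / of_nat n * t) = of_nat n * (- poly h 1 / of_nat n) * t"
      unfolding T_def by (simp only: trace_scale[OF tF] trace_const[OF cF])
    also have "T (B t / of_nat n) = of_nat n * (B t / of_nat n)"
      unfolding T_def by (rule trace_const[OF BF'])
    finally show ?thesis using nz by (simp add: t_def)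
  qed
  have trP: "T (P x) = B (T x)" for x
    unfolding P_def T_def by (simp add: trace_add trace_lin[OF hF] trG[unfolded T_def])
  show ?thesis unfolding P_eq
  proof (rule injI)
    fix x y assume Pxy: "P x = P y"
    have "B (T x) = B (T y)" using trP Pxy by metis
    then have Txy: "T x = T y"
      using Binj unfolding T_def by (meson inj_onD trace_in)
    have "G x = G y" unfolding G_def Txy ..
    then have "lin_assoc q h x = lin_assoc q h y" using Pxy unfolding P_def by simp
    then have L0: "lin_assoc q h (x - y) = 0" by (simp add: lin_diff_arg)
    have T0: "trace_qn q n (x - y) = 0" using Txy unfolding T_def by (simp add: trace_diff)
    have "x - y = 0" by (rule kernel[OF hF hg L0 T0])
    then show "x = y" by simp
  qed
qed


lemma final:
  fixes h b :: "'a poly" and \<theta> :: "nat \<Rightarrow> 'a"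
  assumes hF: "poly_over q h"
    and hg: "gcd h (phi n) = 1"
    and bb: "bij_betw (poly b) (subfield_q q) (subfield_q q)"
    and fin: "finite (UNIV :: 'a set)"
  defines "P \<equiv> (\<lambda>x. lin_assoc q h x
        - (poly h 1 / of_nat n) * trace_qn q n x
        + (\<Sum>i\<le>degree b. (coeff b i / of_nat n) * trace_qn q n x ^ i)
        + (\<Sum>i<q. (\<theta> i ^ q - \<theta> i) * trace_qn q n x ^ i))"
  shows "bij P
    \<and> ((gcd (h + 1) (phi n) = 1
         \<and> bij_betw (\<lambda>x. poly b x + x) (subfield_q q) (subfield_q q))
        \<longrightarrow> bij (\<lambda>x. P x + x))"
proof -
  have Peq: "P = (\<lambda>x. lin_assoc q h x - poly h 1 / of_nat n * trace_qn q n x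
        + poly b (trace_qn q n x) / of_nat n
        + (\<Sum>i<q. (\<theta> i ^ q - \<theta> i) * trace_qn q n x ^ i))"
    unfolding P_def by (simp add: fun_eq_iff poly_altdef sum_divide_distrib)
  have inj1: "inj P"
    unfolding Peq
    by (rule main_inj[OF hF hg]) (use bb in \<open>auto simp: bij_betw_def\<close>)
  have part2: "bij (\<lambda>x. P x + x)"
    if hg2: "gcd (h + 1) (phi n) = 1"
      and bb2: "bij_betw (\<lambda>x. poly b x + x) (subfield_q q) (subfield_q q)"
  proof -
    have hF2: "poly_over q (h + 1)"
      unfolding poly_over_def
    proof
      fix i
      have "coeff (1::'a poly) i \<in> subfield_q q"
        by (cases i) (simp_all add: F_0 F_1)
      then show "coeff (h + 1) i \<in> subfield_q q"
        using hF unfolding poly_over_def by (simp add: F_add)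
    qed
    have eq: "(\<lambda>x. P x + x) = (\<lambda>x. lin_assoc q (h + 1) x - poly (h + 1) 1 / of_nat n * trace_qn q n x
        + (\<lambda>t. poly b t + t) (trace_qn q n x) / of_nat n
        + (\<Sum>i<q. (\<theta> i ^ q - \<theta> i) * trace_qn q n x ^ i))"
    proof
      fix x :: 'a
      define t where "t = trace_qn q n x"
      have a1: "(poly h 1 + 1) / of_nat n * t = poly h 1 / of_nat n * t + t / of_nat n"
        by (simp add: add_divide_distrib distrib_right)
      have a2: "(poly b t + t) / of_nat n = poly b t / of_nat n + t / of_nat n"
        by (simp add: add_divide_distrib)
      show "P x + x = lin_assoc q (h + 1) x - poly (h + 1) 1 / of_nat n * trace_qn q n x
        + (\<lambda>t. poly b t + t) (trace_qn q n x) / of_nat n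
        + (\<Sum>i<q. (\<theta> i ^ q - \<theta> i) * trace_qn q n x ^ i)"
        unfolding Peq t_def[symmetric] by (simp add: lin_assoc_add add_divide_distrib distrib_right)
    qed
    have "inj (\<lambda>x. P x + x)"
      unfolding eq
      by (rule main_inj[OF hF2 hg2]) (use bb2 in \<open>auto simp: bij_betw_def\<close>)
    then show ?thesis using fin by (simp add: bij_def finite_UNIV_inj_surj)
  qed
  show ?thesis using inj1 fin part2 by (simp add: bij_def finite_UNIV_inj_surj)
qed
end

theorem corollary3p7:
  fixes p q n k :: nat and h b :: "'a::{field_gcd,finite} poly" and \<theta> :: "nat \<Rightarrow> 'a"
  assumes "prime p" and "k > 0" and "q = p ^ k"
    and "n > 0" and "\<not> p dvd n"
    and "card (UNIV :: 'a set) = q ^ n"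
    and "poly_over q h" and "poly_over q b"
    and "gcd h ((monom 1 n - 1) div [:-1, 1:]) = 1"
    and "bij_betw (poly b) (subfield_q q) (subfield_q q)"
  defines "P \<equiv> (\<lambda>x. lin_assoc q h x
        - (poly h 1 / of_nat n) * trace_qn q n x
        + (\<Sum>i\<le>degree b. (coeff b i / of_nat n) * trace_qn q n x ^ i)
        + (\<Sum>i<q. (\<theta> i ^ q - \<theta> i) * trace_qn q n x ^ i))"
  shows "bij P
    \<and> ((gcd (h + 1) ((monom 1 n - 1) div [:-1, 1:]) = 1
         \<and> bij_betw (\<lambda>x. poly b x + x) (subfield_q q) (subfield_q q))
        \<longrightarrow> bij (\<lambda>x. P x + x))"
proof -
  have cpos: "CHAR('a) > 0" by (rule finite_imp_CHAR_pos) simp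
  have cprime: "prime CHAR('a)" using cpos by (rule prime_CHAR_semidom)
  have "CHAR('a) dvd p ^ (k * n)"
    using char_dvd_card[where 'a = 'a] assms(3,6) by (simp add: power_mult)
  then have "CHAR('a) dvd p" using cprime prime_dvd_power by blast
  then have cp: "CHAR('a) = p" using cprime assms(1) primes_dvd_imp_eq by blast
  have frob: "\<And>x y::'a. (x + y) ^ q = x ^ q + y ^ q"
  proof -
    fix x y :: 'a
    show "(x + y) ^ q = x ^ q + y ^ q"
      by (rule freshmans_dream'[where 'a = 'a, of q k]) (use cprime cp assms(3) in auto)
  qed
  have qpos: "q > 0" using assms(1,3) prime_gt_0_nat by simp
  have fixq: "\<And>x::'a. x ^ (q ^ n) = x"
    using power_card_eq_same assms(6) by metis
  have nz: "(of_nat n :: 'a) \<noteq> 0"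
    using assms(5) cp by (simp add: of_nat_eq_0_iff_char_dvd)
  have pd: "(monom 1 n - 1) div [:-1, 1:] = (phi n :: 'a poly)" by (rule phi_div)
  show ?thesis
    unfolding pd P_def
    by (rule final[OF frob qpos assms(4) fixq nz assms(7) assms(9)[unfolded pd] assms(10)]) simp
qed

end
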